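(* The collection $\mathsf g=\{\mathsf g(n)\}_{n\ge2}$, with operadic compositions $\circ_i:\mathsf g(m)\times\mathsf g(n)\to\mathsf g(m+n-1)$ given by grafting, is a nonsymmetric operad in the category of sets, and it is the free nonsymmetric operad generated by the collection $\mathsf p=\{\mathsf p(n)\}_{n\ge2}$ of prime chord diagrams.
   Context: $\mathsf g(n)$ is the set of gravity chord diagrams on an $(n+1)$-gon: sides labeled $1,\dots,n+1$ cyclically with side $n+1$ distinguished; a chord (segment between non-adjacent vertices) is labeled $\{i,j\}$, $i<j$, where $\{i,\dots,j\}$ is the interval of sides it cuts off not containing side $n+1$; a chord diagram is a set of chords; it is a gravity chord diagram if it contains no two chords $\{i,j\},\{j,k\}$ with $i<j<k$ and no three chords $\{i,k\},\{j,k\},\{j,l\}$ with $i<j<k<l$. The composition $G_1\circ_i G_2$ for $G_1\in\mathsf g(m)$, $G_2\in\mathsf g(n)$ glues the distinguished side of the $(n+1)$-gon of $G_2$ onto side $i$ of the $(m+1)$-gon of $G_1$ and takes the diagram $G_1\cup G_2\cup\{\text{glued side}\}$ on the resulting $(m+n)$-gon, whose distinguished side is that of $G_1$. A chord of a diagram is residual if no other chord of the diagram crosses it; a gravity chord diagram is prime if it has no residual chords, and $\mathsf p(n)\subset\mathsf g(n)$ denotes the set of prime ones. *)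

theory Defs
  imports Main
begin

text \<open>Chords of an (n+1)-gon: a chord is encoded by the pair (i,j), i<j, where
  {i..j} is the interval of sides it cuts off not containing side n+1.
  Side k joins vertices k-1 and k (vertices 0..n), so chord (i,j) joins vertices
  i-1 and j; non-adjacency means i<j and (i,j) is not (1,n).\<close>

definition chord :: "nat \<Rightarrow> nat \<times> nat \<Rightarrow> bool" where
  "chord n c \<longleftrightarrow> (case c of (i, j) \<Rightarrow> 1 \<le> i \<and> i < j \<and> j \<le> n \<and> (i, j) \<noteq> (1, n))"

definition chord_diagram :: "nat \<Rightarrow> (nat \<times> nat) set \<Rightarrow> bool" where
  "chord_diagram n G \<longleftrightarrow> (\<forall>c\<in>G. chord n c)"

definition gravity_diagram :: "nat \<Rightarrow> (nat \<times> nat) set \<Rightarrow> bool" where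
  "gravity_diagram n G \<longleftrightarrow> chord_diagram n G
     \<and> \<not> (\<exists>i j k. i < j \<and> j < k \<and> (i, j) \<in> G \<and> (j, k) \<in> G)
     \<and> \<not> (\<exists>i j k l. i < j \<and> j < k \<and> k < l \<and> (i, k) \<in> G \<and> (j, k) \<in> G \<and> (j, l) \<in> G)"

definition gdiag :: "nat \<Rightarrow> (nat \<times> nat) set set" where
  "gdiag n = {G. gravity_diagram n G}"

text \<open>Crossing of chords: (i,j) joins vertices i-1,j and (k,l) joins k-1,l;
  they cross iff the endpoints strictly interleave.\<close>
definition crosses :: "nat \<times> nat \<Rightarrow> nat \<times> nat \<Rightarrow> bool" where
  "crosses c d \<longleftrightarrow> (case c of (i, j) \<Rightarrow> case d of (k, l) \<Rightarrow>
      (i < k \<and> k \<le> j \<and> j < l) \<or> (k < i \<and> i \<le> l \<and> l < j))"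

definition residual :: "(nat \<times> nat) set \<Rightarrow> nat \<times> nat \<Rightarrow> bool" where
  "residual G c \<longleftrightarrow> c \<in> G \<and> \<not> (\<exists>d\<in>G. d \<noteq> c \<and> crosses d c)"

definition pdiag :: "nat \<Rightarrow> (nat \<times> nat) set set" where
  "pdiag n = {G. gravity_diagram n G \<and> \<not> (\<exists>c. residual G c)}"

text \<open>Grafting G1 \<circ>_i G2 with G1 in g(m), G2 in g(n): sides 1..i-1 of G1 stay,
  sides 1..n of G2 become i..i+n-1, sides i+1..m of G1 become i+n..m+n-1.\<close>
definition shift_outer :: "nat \<Rightarrow> nat \<Rightarrow> nat \<times> nat \<Rightarrow> nat \<times> nat" where
  "shift_outer n i c = (case c of (a, b) \<Rightarrow>
      (if a \<le> i then a else a + n - 1, if b < i then b else b + n - 1))"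

definition shift_inner :: "nat \<Rightarrow> nat \<times> nat \<Rightarrow> nat \<times> nat" where
  "shift_inner i c = (case c of (a, b) \<Rightarrow> (a + i - 1, b + i - 1))"

definition gcomp :: "nat \<Rightarrow> nat \<Rightarrow> nat \<Rightarrow> (nat \<times> nat) set \<Rightarrow> (nat \<times> nat) set \<Rightarrow> (nat \<times> nat) set" where
  "gcomp m n i G1 G2 = shift_outer n i ` G1 \<union> shift_inner i ` G2 \<union> {(i, i + n - 1)}"

text \<open>Nonsymmetric (non-unital) operads in Set with arities \<ge> 2:
  a collection Op(n), n \<ge> 2, and partial compositions
  c m n i : Op(m) \<times> Op(n) \<rightarrow> Op(m+n-1), 1 \<le> i \<le> m, satisfying the sequential
  and parallel associativity axioms.\<close>
definition ns_operad :: "(nat \<Rightarrow> 'a set) \<Rightarrow> (nat \<Rightarrow> nat \<Rightarrow> nat \<Rightarrow> 'a \<Rightarrow> 'a \<Rightarrow> 'a) \<Rightarrow> bool" where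
  "ns_operad Op c \<longleftrightarrow>
     (\<forall>m n i x y. 2 \<le> m \<longrightarrow> 2 \<le> n \<longrightarrow> 1 \<le> i \<longrightarrow> i \<le> m \<longrightarrow> x \<in> Op m \<longrightarrow> y \<in> Op n
        \<longrightarrow> c m n i x y \<in> Op (m + n - 1))
   \<and> (\<forall>l m n i j x y z. 2 \<le> l \<longrightarrow> 2 \<le> m \<longrightarrow> 2 \<le> n \<longrightarrow> 1 \<le> i \<longrightarrow> i \<le> l \<longrightarrow> 1 \<le> j \<longrightarrow> j \<le> m
        \<longrightarrow> x \<in> Op l \<longrightarrow> y \<in> Op m \<longrightarrow> z \<in> Op n
        \<longrightarrow> c (l + m - 1) n (i + j - 1) (c l m i x y) z = c l (m + n - 1) i x (c m n j y z))
   \<and> (\<forall>l m n i j x y z. 2 \<le> l \<longrightarrow> 2 \<le> m \<longrightarrow> 2 \<le> n \<longrightarrow> 1 \<le> i \<longrightarrow> i < j \<longrightarrow> j \<le> l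
        \<longrightarrow> x \<in> Op l \<longrightarrow> y \<in> Op m \<longrightarrow> z \<in> Op n
        \<longrightarrow> c (l + m - 1) n (j + m - 1) (c l m i x y) z = c (l + n - 1) m i (c l n j x z) y)"

text \<open>Morphisms of such operads (only their values on the carriers matter).\<close>
definition ns_operad_hom :: "(nat \<Rightarrow> 'a set) \<Rightarrow> (nat \<Rightarrow> nat \<Rightarrow> nat \<Rightarrow> 'a \<Rightarrow> 'a \<Rightarrow> 'a)
    \<Rightarrow> (nat \<Rightarrow> 'b set) \<Rightarrow> (nat \<Rightarrow> nat \<Rightarrow> nat \<Rightarrow> 'b \<Rightarrow> 'b \<Rightarrow> 'b) \<Rightarrow> (nat \<Rightarrow> 'a \<Rightarrow> 'b) \<Rightarrow> bool" where
  "ns_operad_hom Op c Q d F \<longleftrightarrow>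
     (\<forall>n x. 2 \<le> n \<longrightarrow> x \<in> Op n \<longrightarrow> F n x \<in> Q n)
   \<and> (\<forall>m n i x y. 2 \<le> m \<longrightarrow> 2 \<le> n \<longrightarrow> 1 \<le> i \<longrightarrow> i \<le> m \<longrightarrow> x \<in> Op m \<longrightarrow> y \<in> Op n
        \<longrightarrow> F (m + n - 1) (c m n i x y) = d m n i (F m x) (F n y))"

end

theory Submission
  imports Defs
begin


definition so :: "nat \<Rightarrow> nat \<Rightarrow> nat \<times> nat \<Rightarrow> nat \<times> nat" where
  "so n i c = (if fst c \<le> i then fst c else fst c + n - 1, if snd c < i then snd c else snd c + n - 1)"
definition si :: "nat \<Rightarrow> nat \<times> nat \<Rightarrow> nat \<times> nat" where
  "si i c = (fst c + i - 1, snd c + i - 1)"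

lemma so_eq: "shift_outer n i = so n i"
  by (auto simp: fun_eq_iff shift_outer_def so_def split: prod.splits)
lemma si_eq: "shift_inner i = si i"
  by (auto simp: fun_eq_iff shift_inner_def si_def split: prod.splits)

lemma gcomp_alt: "gcomp m n i G1 G2 = so n i ` G1 \<union> si i ` G2 \<union> {(i, i + n - 1)}"
  by (simp add: gcomp_def so_eq si_eq)

lemma gcomp_mem:
  "x \<in> gcomp m n i G1 G2 \<longleftrightarrow> (\<exists>c\<in>G1. x = so n i c) \<or> (\<exists>c\<in>G2. x = si i c) \<or> x = (i, i + n - 1)"
  unfolding gcomp_alt by blast

lemma closure_chord:
  assumes "chord_diagram m G1" "chord_diagram n G2" "2 \<le> m" "2 \<le> n" "1 \<le> i" "i \<le> m"
  shows "chord_diagram (m + n - 1) (gcomp m n i G1 G2)"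
  unfolding chord_diagram_def
proof
  fix x assume "x \<in> gcomp m n i G1 G2"
  then consider c where "c\<in>G1" "x = so n i c" | c where "c\<in>G2" "x = si i c" | "x = (i, i + n - 1)"
    unfolding gcomp_mem by blast
  then show "chord (m + n - 1) x"
  proof cases
    case 1 then show ?thesis using assms unfolding chord_diagram_def
      by (cases c) (auto simp: chord_def so_def)
  next
    case 2 then show ?thesis using assms unfolding chord_diagram_def
      by (cases c) (auto simp: chord_def si_def)
  next
    case 3 then show ?thesis using assms by (auto simp: chord_def)
  qed
qed


lemma gcomp_memE:
  assumes "x \<in> gcomp m n i G1 G2"
  shows "(\<exists>a b. (a,b)\<in>G1 \<and> x = so n i (a,b)) \<or> (\<exists>a b. (a,b)\<in>G2 \<and> x = si i (a,b)) \<or> x = (i, i + n - 1)"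
  using assms unfolding gcomp_mem by auto


definition sO :: "nat \<Rightarrow> nat \<Rightarrow> nat \<Rightarrow> nat" where "sO n i a = (if a \<le> i then a else a + n - 1)"
definition eO :: "nat \<Rightarrow> nat \<Rightarrow> nat \<Rightarrow> nat" where "eO n i a = (if a < i then a else a + n - 1)"

lemma so_pair: "so n i (a,b) = (sO n i a, eO n i b)" by (simp add: so_def sO_def eO_def)
lemma si_pair: "si i (a,b) = (a + i - 1, b + i - 1)" by (simp add: si_def)

lemma sO_less_iff: "1 \<le> n \<Longrightarrow> sO n i a < sO n i b \<longleftrightarrow> a < b" by (auto simp: sO_def)
lemma eO_less_iff: "1 \<le> n \<Longrightarrow> eO n i a < eO n i b \<longleftrightarrow> a < b" by (auto simp: eO_def)
lemma sO_inj: "1 \<le> n \<Longrightarrow> sO n i a = sO n i b \<longleftrightarrow> a = b" by (auto simp: sO_def)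
lemma eO_inj: "1 \<le> n \<Longrightarrow> eO n i a = eO n i b \<longleftrightarrow> a = b" by (auto simp: eO_def)
lemma sO_eO: "2 \<le> n \<Longrightarrow> sO n i a = eO n i b \<longleftrightarrow> a = b \<and> a \<noteq> i" by (auto simp: sO_def eO_def)
lemma sO_range: "sO n i a \<le> i \<or> (i + n \<le> sO n i a \<and> i < a)" by (auto simp: sO_def)
lemma eO_range: "eO n i a < i \<or> (i + n - 1 \<le> eO n i a \<and> i \<le> a)" by (auto simp: eO_def)
lemma sO_le: "a \<le> i \<Longrightarrow> sO n i a = a" by (simp add: sO_def)
lemma eO_lt: "a < i \<Longrightarrow> eO n i a = a" by (simp add: eO_def)
lemma sO_gt: "i < a \<Longrightarrow> sO n i a = a + n - 1" by (simp add: sO_def)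
lemma eO_ge: "i \<le> a \<Longrightarrow> eO n i a = a + n - 1" by (simp add: eO_def)

lemma cdE: "chord_diagram n G \<Longrightarrow> (a,b)\<in>G \<Longrightarrow> 1 \<le> a \<and> a < b \<and> b \<le> n \<and> (a,b) \<noteq> (1,n)"
  by (auto simp: chord_diagram_def chord_def)
lemma gravE1: "gravity_diagram n G \<Longrightarrow> (a,b)\<in>G \<Longrightarrow> (b,c)\<in>G \<Longrightarrow> a < b \<Longrightarrow> b < c \<Longrightarrow> False"
  unfolding gravity_diagram_def by blast
lemma gravE2: "gravity_diagram n G \<Longrightarrow> (a,k)\<in>G \<Longrightarrow> (b,k)\<in>G \<Longrightarrow> (b,l)\<in>G \<Longrightarrow> a < b \<Longrightarrow> b < k \<Longrightarrow> k < l \<Longrightarrow> False"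
  unfolding gravity_diagram_def by blast
lemma grav_cd: "gravity_diagram n G \<Longrightarrow> chord_diagram n G" by (simp add: gravity_diagram_def)


lemma closure_g1:
  assumes g1: "gravity_diagram m G1" and g2: "gravity_diagram n G2" and mn: "2 \<le> m" "2 \<le> n" "1 \<le> i" "i \<le> m"
    and pq: "p < q" "q < r" and m1: "(p,q) \<in> gcomp m n i G1 G2" and m2: "(q,r) \<in> gcomp m n i G1 G2"
  shows False
proof -
  note c1 = cdE[OF grav_cd[OF g1]] and c2 = cdE[OF grav_cd[OF g2]]
  from gcomp_memE[OF m1] gcomp_memE[OF m2] show False
  proof (elim disjE exE conjE)
    fix a b a' b' assume h: "(a,b)\<in>G1" "(p,q) = so n i (a,b)" "(a',b')\<in>G1" "(q,r) = so n i (a',b')"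
    hence e: "q = eO n i b" "q = sO n i a'" "r = eO n i b'" by (simp_all add: so_pair)
    hence "a' = b" using sO_eO[OF mn(2)] by metis
    moreover have "b < b'" using e pq eO_less_iff[of n i b b'] mn by simp
    ultimately show False using gravE1[OF g1 h(1)] h(3) c1[OF h(1)] by blast
  next
    fix a b a' b' assume h: "(a,b)\<in>G1" "(p,q) = so n i (a,b)" "(a',b')\<in>G2" "(q,r) = si i (a',b')"
    hence "q = eO n i b" "q = a' + i - 1" by (simp_all add: so_pair si_pair)
    then show False using c2[OF h(3)] eO_range[of n i b] mn by linarith
  next
    fix a b assume h: "(a,b)\<in>G1" "(p,q) = so n i (a,b)" "(q,r) = (i, i + n - 1)"
    hence "q = eO n i b" "q = i" by (simp_all add: so_pair)
    then show False using eO_range[of n i b] mn by linarith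
  next
    fix a b a' b' assume h: "(a,b)\<in>G2" "(p,q) = si i (a,b)" "(a',b')\<in>G1" "(q,r) = so n i (a',b')"
    hence "q = b + i - 1" "q = sO n i a'" by (simp_all add: so_pair si_pair)
    then show False using c2[OF h(1)] sO_range[of n i a'] mn by linarith
  next
    fix a b a' b' assume h: "(a,b)\<in>G2" "(p,q) = si i (a,b)" "(a',b')\<in>G2" "(q,r) = si i (a',b')"
    hence e: "p = a + i - 1" "q = b + i - 1" "q = a' + i - 1" "r = b' + i - 1" by (simp_all add: si_pair)
    have "a' = b" "b < b'" using e pq mn by linarith+
    then show False using gravE1[OF g2 h(1)] h(3) c2[OF h(1)] by blast
  next
    fix a b assume h: "(a,b)\<in>G2" "(p,q) = si i (a,b)" "(q,r) = (i, i + n - 1)"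
    hence "q = b + i - 1" "q = i" by (simp_all add: si_pair)
    then show False using c2[OF h(1)] mn by linarith
  next
    fix a b assume h: "(p,q) = (i, i + n - 1)" "(a,b)\<in>G1" "(q,r) = so n i (a,b)"
    hence "q = i + n - 1" "q = sO n i a" by (simp_all add: so_pair)
    then show False using sO_range[of n i a] mn by linarith
  next
    fix a b assume h: "(p,q) = (i, i + n - 1)" "(a,b)\<in>G2" "(q,r) = si i (a,b)"
    hence "q = i + n - 1" "q = a + i - 1" by (simp_all add: si_pair)
    then show False using c2[OF h(2)] mn by linarith
  next
    assume "(p,q) = (i, i + n - 1)" "(q,r) = (i, i + n - 1)"
    then show False using pq by auto
  qed
qed


lemma gcomp_cases:
  assumes "(x,y) \<in> gcomp m n i G1 G2"
  obtains (O) a b where "(a,b)\<in>G1" "x = sO n i a" "y = eO n i b"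
    | (I) a b where "(a,b)\<in>G2" "x = a + i - 1" "y = b + i - 1"
    | (C) "x = i" "y = i + n - 1"
  using gcomp_memE[OF assms] by (auto simp: so_pair si_pair)

lemma sO_eq_self: "2 \<le> n \<Longrightarrow> sO n i a = i \<longleftrightarrow> a = i" by (auto simp: sO_def)
lemma eO_eq_top: "2 \<le> n \<Longrightarrow> eO n i a = i + n - 1 \<longleftrightarrow> a = i" by (auto simp: eO_def)

lemma closure_g2:
  assumes g1: "gravity_diagram m G1" and g2: "gravity_diagram n G2" and mn: "2 \<le> m" "2 \<le> n" "1 \<le> i" "i \<le> m"
    and pq: "p < q" "q < k" "k < l" and mA: "(p,k) \<in> gcomp m n i G1 G2" and mB: "(q,k) \<in> gcomp m n i G1 G2"
    and mC: "(q,l) \<in> gcomp m n i G1 G2"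
  shows False
proof -
  note c1 = cdE[OF grav_cd[OF g1]] and c2 = cdE[OF grav_cd[OF g2]]
  have n1: "1 \<le> n" using mn by simp
  show False
  using mB proof (cases rule: gcomp_cases)
    case (O a2 b2)
    note B = this
    show False using mA proof (cases rule: gcomp_cases)
      case (O a1 b1)
      note A = this
      have "b1 = b2" using A B eO_inj[OF n1] by metis
      have "a1 < a2" using A B pq sO_less_iff[OF n1] by metis
      show False using mC proof (cases rule: gcomp_cases)
        case (O a3 b3)
        have "a3 = a2" using O B sO_inj[OF n1] by metis
        have "b2 < b3" using O B pq eO_less_iff[OF n1] by metis
        show False using gravE2[OF g1, of a1 b2 a2 b3] A B O \<open>b1 = b2\<close> \<open>a3 = a2\<close> \<open>a1 < a2\<close> \<open>b2 < b3\<close> c1[OF B(1)]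
          by auto
      next
        case (I a3 b3)
        then show False using B pq c2[OF I(1)] sO_range[of n i a2] eO_range[of n i b2] by linarith
      next
        case C
        then show False using B pq sO_range[of n i a2] eO_range[of n i b2] by linarith
      qed
    next
      case (I a1 b1)
      then show False using B pq c2[OF I(1)] sO_range[of n i a2] eO_range[of n i b2] by linarith
    next
      case C
      then show False using B pq sO_range[of n i a2] eO_range[of n i b2] by linarith
    qed
  next
    case (I a2 b2)
    note B = this
    show False using mC proof (cases rule: gcomp_cases)
      case (O a3 b3)
      note C = this
      show False using mA proof (cases rule: gcomp_cases)
        case (O a1 b1)
        have "q = i" using C B c2[OF B(1)] sO_range[of n i a3] by linarith
        have "k = i + n - 1" using O B pq c2[OF B(1)] eO_range[of n i b1] by linarith
        have "a2 = 1" "b2 = n" using B \<open>q = i\<close> \<open>k = i + n - 1\<close> mn by auto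
        then show False using c2[OF B(1)] by simp
      next
        case (I a1 b1)
        then show False using C B pq c2[OF B(1)] c2[OF I(1)] sO_range[of n i a3] by linarith
      next
        case C
        then show False using \<open>q = sO n i a3\<close> B pq c2[OF B(1)] sO_range[of n i a3] by linarith
      qed
    next
      case (I a3 b3)
      note C = this
      show False using mA proof (cases rule: gcomp_cases)
        case (O a1 b1)
        then show False using C B pq c2[OF B(1)] c2[OF C(1)] eO_range[of n i b1] by linarith
      next
        case (I a1 b1)
        have "a1 < a2" "a2 < b1" "b1 < b3" "b1 = b2" "a3 = a2" using I B C pq mn by linarith+
        then show False using gravE2[OF g2, of a1 b1 a2 b3] I(1) B(1) C(1) by auto
      next
        case C
        then show False using \<open>l = b3 + i - 1\<close> pq c2[OF \<open>(a3,b3)\<in>G2\<close>] by linarith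
      qed
    next
      case C
      note CC = this
      show False using mA proof (cases rule: gcomp_cases)
        case (O a1 b1)
        then show False using CC B pq c2[OF B(1)] eO_range[of n i b1] by linarith
      next
        case (I a1 b1)
        then show False using CC pq c2[OF I(1)] by linarith
      next
        case C
        then show False using CC pq by linarith
      qed
    qed
  next
    case C
    note B = this
    show False using mA proof (cases rule: gcomp_cases)
      case (O a1 b1)
      note A = this
      have "b1 = i" using A B eO_eq_top[OF mn(2)] by metis
      have "a1 < i" using A B pq sO_range[of n i a1] by (auto simp: sO_def split: if_splits)
      show False using mC proof (cases rule: gcomp_cases)
        case (O a3 b3)
        have "a3 = i" using O B sO_eq_self[OF mn(2)] by metis
        then show False using gravE1[OF g1, of a1 i b3] A(1) O(1) \<open>b1 = i\<close> \<open>a1 < i\<close> c1[OF O(1)] by auto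
      next
        case (I a3 b3)
        then show False using B pq c2[OF I(1)] by linarith
      next
        case C
        then show False using B pq by linarith
      qed
    next
      case (I a1 b1)
      then show False using B pq c2[OF I(1)] by linarith
    next
      case C
      then show False using B pq by linarith
    qed
  qed
qed

lemma closure_grav:
  assumes "gravity_diagram m G1" "gravity_diagram n G2" "2 \<le> m" "2 \<le> n" "1 \<le> i" "i \<le> m"
  shows "gravity_diagram (m + n - 1) (gcomp m n i G1 G2)"
  unfolding gravity_diagram_def
  using closure_chord[OF grav_cd[OF assms(1)] grav_cd[OF assms(2)] assms(3-6)]
    closure_g1[OF assms] closure_g2[OF assms] by blast




lemma img_cong_cd: "chord_diagram n G \<Longrightarrow> (\<And>a b. 1 \<le> a \<Longrightarrow> a < b \<Longrightarrow> b \<le> n \<Longrightarrow> f (a,b) = g (a,b)) \<Longrightarrow> f ` G = g ` G"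
  by (rule image_cong) (auto simp: chord_diagram_def chord_def)

lemma seq_assoc:
  assumes x: "chord_diagram l x" and y: "chord_diagram m y" and z: "chord_diagram n z"
    and "2 \<le> l" "2 \<le> m" "2 \<le> n" "1 \<le> i" "i \<le> l" "1 \<le> j" "j \<le> m"
  shows "gcomp (l + m - 1) n (i + j - 1) (gcomp l m i x y) z = gcomp l (m + n - 1) i x (gcomp m n j y z)"
proof -
  have 1: "so n (i + j - 1) ` so m i ` x = so (m + n - 1) i ` x"
    unfolding image_image by (rule img_cong_cd[OF x]) (use assms in \<open>auto simp: so_def\<close>)
  have 2: "so n (i + j - 1) ` si i ` y = si i ` so n j ` y"
    unfolding image_image by (rule img_cong_cd[OF y]) (use assms in \<open>auto simp: so_def si_def\<close>)
  have 3: "si (i + j - 1) ` z = si i ` si j ` z"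
    unfolding image_image by (rule img_cong_cd[OF z]) (use assms in \<open>auto simp: si_def\<close>)
  have 4: "so n (i + j - 1) (i, i + m - 1) = (i, i + (m + n - 1) - 1)" using assms by (auto simp: so_def)
  have 5: "si i (j, j + n - 1) = (i + j - 1, i + j - 1 + n - 1)" using assms by (auto simp: si_def)
  show ?thesis unfolding gcomp_alt image_Un image_insert image_empty 1 2 3 4 5 by blast
qed

lemma par_assoc:
  assumes x: "chord_diagram l x" and y: "chord_diagram m y" and z: "chord_diagram n z"
    and "2 \<le> l" "2 \<le> m" "2 \<le> n" "1 \<le> i" "i < j" "j \<le> l"
  shows "gcomp (l + m - 1) n (j + m - 1) (gcomp l m i x y) z = gcomp (l + n - 1) m i (gcomp l n j x z) y"
proof -
  have 1: "so n (j + m - 1) ` so m i ` x = so m i ` so n j ` x"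
    unfolding image_image by (rule img_cong_cd[OF x]) (use assms in \<open>auto simp: so_def add.commute add.left_commute\<close>)
  have 2: "so n (j + m - 1) ` si i ` y = si i ` y"
    unfolding image_image by (rule img_cong_cd[OF y]) (use assms in \<open>auto simp: so_def si_def\<close>)
  have 3: "si (j + m - 1) ` z = so m i ` si j ` z"
    unfolding image_image by (rule img_cong_cd[OF z]) (use assms in \<open>auto simp: so_def si_def\<close>)
  have 4: "so n (j + m - 1) (i, i + m - 1) = (i, i + m - 1)" using assms by (auto simp: so_def)
  have 5: "so m i (j, j + n - 1) = (j + m - 1, j + m - 1 + n - 1)" using assms by (auto simp: so_def)
  show ?thesis unfolding gcomp_alt image_Un image_insert image_empty 1 2 3 4 5 by blast
qed

lemma gdiag_iff: "G \<in> gdiag n \<longleftrightarrow> gravity_diagram n G" by (simp add: gdiag_def)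

lemma g_operad: "ns_operad gdiag gcomp"
  unfolding ns_operad_def gdiag_iff
proof (intro conjI allI impI)
  fix m n i x y assume "2 \<le> m" "2 \<le> n" "1 \<le> i" "i \<le> m" "gravity_diagram m x" "gravity_diagram n y"
  then show "gravity_diagram (m + n - 1) (gcomp m n i x y)" using closure_grav by blast
next
  fix l m n i j x y z assume "2 \<le> l" "2 \<le> m" "2 \<le> n" "1 \<le> i" "i \<le> l" "1 \<le> j" "j \<le> m"
    "gravity_diagram l x" "gravity_diagram m y" "gravity_diagram n z"
  then show "gcomp (l + m - 1) n (i + j - 1) (gcomp l m i x y) z = gcomp l (m + n - 1) i x (gcomp m n j y z)"
    using seq_assoc grav_cd by blast
next
  fix l m n i j x y z assume "2 \<le> l" "2 \<le> m" "2 \<le> n" "1 \<le> i" "i < j" "j \<le> l"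
    "gravity_diagram l x" "gravity_diagram m y" "gravity_diagram n z"
  then show "gcomp (l + m - 1) n (j + m - 1) (gcomp l m i x y) z = gcomp (l + n - 1) m i (gcomp l n j x z) y"
    using par_assoc grav_cd by blast
qed




definition uo :: "nat \<Rightarrow> nat \<Rightarrow> nat \<times> nat \<Rightarrow> nat \<times> nat" where
  "uo n a d = (if fst d \<le> a then fst d else fst d - (n - 1), if snd d < a then snd d else snd d - (n - 1))"
definition inside :: "nat \<Rightarrow> nat \<Rightarrow> nat \<times> nat \<Rightarrow> bool" where
  "inside n a d \<longleftrightarrow> a \<le> fst d \<and> snd d \<le> a + n - 1"
definition ui :: "nat \<Rightarrow> nat \<times> nat \<Rightarrow> nat \<times> nat" where
  "ui a d = (fst d + 1 - a, snd d + 1 - a)"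
definition outerD :: "nat \<Rightarrow> nat \<Rightarrow> (nat \<times> nat) set \<Rightarrow> (nat \<times> nat) set" where
  "outerD n a G = uo n a ` {d\<in>G. \<not> inside n a d}"
definition innerD :: "nat \<Rightarrow> nat \<Rightarrow> (nat \<times> nat) set \<Rightarrow> (nat \<times> nat) set" where
  "innerD n a G = ui a ` {d\<in>G. inside n a d \<and> d \<noteq> (a, a + n - 1)}"

lemma recover:
  assumes c1: "chord_diagram m G1" and c2: "chord_diagram n G2" and mn: "2 \<le> n" "1 \<le> i" "i \<le> m"
  shows "outerD n i (gcomp m n i G1 G2) = G1" "innerD n i (gcomp m n i G1 G2) = G2"
proof -
  have so_out: "\<not> inside n i (so n i c)" if "c \<in> G1" for c
    using cdE[OF c1, of "fst c" "snd c"] that mn by (cases c) (auto simp: inside_def so_def)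
  have si_in: "inside n i (si i c) \<and> si i c \<noteq> (i, i + n - 1)" if "c \<in> G2" for c
    using cdE[OF c2, of "fst c" "snd c"] that mn by (cases c) (auto simp: inside_def si_def)
  have gl: "inside n i (i, i + n - 1)" by (simp add: inside_def)
  have A: "{d \<in> gcomp m n i G1 G2. \<not> inside n i d} = so n i ` G1"
    unfolding gcomp_alt using so_out si_in gl by blast
  have B: "{d \<in> gcomp m n i G1 G2. inside n i d \<and> d \<noteq> (i, i + n - 1)} = si i ` G2"
    unfolding gcomp_alt using so_out si_in gl by (auto; force)
  have A2: "uo n i ` so n i ` G1 = id ` G1"
    unfolding image_image by (rule img_cong_cd[OF c1]) (use mn in \<open>auto simp: uo_def so_def\<close>)
  have B2: "ui i ` si i ` G2 = id ` G2"
    unfolding image_image by (rule img_cong_cd[OF c2]) (use mn in \<open>auto simp: ui_def si_def\<close>)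
  show "outerD n i (gcomp m n i G1 G2) = G1" unfolding outerD_def A A2 by simp
  show "innerD n i (gcomp m n i G1 G2) = G2" unfolding innerD_def B B2 by simp
qed


lemma crosses_pair: "crosses (k,l) (a,b) \<longleftrightarrow> (k < a \<and> a \<le> l \<and> l < b) \<or> (a < k \<and> k \<le> b \<and> b < l)"
  by (auto simp: crosses_def)

lemma decomp:
  assumes g: "gravity_diagram N G" and r: "residual G (a,b)"
  defines "n \<equiv> b + 1 - a" and "m \<equiv> N + a - b"
  shows "2 \<le> m" "2 \<le> n" "1 \<le> a" "a \<le> m" "N = m + n - 1" "b = a + n - 1"
    "gravity_diagram m (outerD n a G)" "gravity_diagram n (innerD n a G)"
    "G = gcomp m n a (outerD n a G) (innerD n a G)"
proof -
  note cG = cdE[OF grav_cd[OF g]]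
  have abG: "(a,b) \<in> G" using r by (simp add: residual_def)
  have nc: "\<And>k l. (k,l) \<in> G \<Longrightarrow> (k,l) \<noteq> (a,b) \<Longrightarrow> \<not> ((k < a \<and> a \<le> l \<and> l < b) \<or> (a < k \<and> k \<le> b \<and> b < l))"
    using r unfolding residual_def crosses_pair[symmetric] by blast
  have cab: "1 \<le> a" "a < b" "b \<le> N" "(a,b) \<noteq> (1,N)" using cG[OF abG] by auto
  show m2: "2 \<le> m" and n2: "2 \<le> n" and "1 \<le> a" and am: "a \<le> m" and Nmn: "N = m + n - 1" and ban: "b = a + n - 1"
    using cab unfolding m_def n_def by auto
  have n1: "1 \<le> n" using n2 by simp
  have out_id: "so n a (uo n a d) = d" and out_ch: "chord m (uo n a d)"
    if "d \<in> G" "\<not> inside n a d" for d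
  proof -
    obtain k l where d: "d = (k,l)" by (cases d)
    have kl: "1 \<le> k" "k < l" "l \<le> N" "(k,l) \<noteq> (1,N)" using cG that d by auto
    have ni: "\<not> (a \<le> k \<and> l \<le> b)" using that d ban by (simp add: inside_def)
    have ne: "(k,l) \<noteq> (a,b)" using ni by auto
    have ncr: "\<not> ((k < a \<and> a \<le> l \<and> l < b) \<or> (a < k \<and> k \<le> b \<and> b < l))" using nc that d ne by blast
    have k1: "b < k" if "a < k" using ni ncr that by auto
    have l1: "b \<le> l" if "a \<le> l" using ni ncr that by auto
    have nb: "n - 1 = b - a" by (simp add: n_def)
    show "so n a (uo n a d) = d" unfolding d
      using k1 l1 kl cab by (cases "k \<le> a"; cases "l < a"; auto simp add: so_def uo_def n_def)
    show "chord m (uo n a d)" unfolding d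
      using k1 l1 kl cab ne by (cases "k \<le> a"; cases "l < a"; auto simp add: chord_def uo_def n_def m_def)
  qed
  have in_id: "si a (ui a d) = d" and in_ch: "chord n (ui a d)"
    if "d \<in> G" "inside n a d" "d \<noteq> (a, a + n - 1)" for d
  proof -
    obtain k l where d: "d = (k,l)" by (cases d)
    have kl: "1 \<le> k" "k < l" "l \<le> N" using cG that d by auto
    have ii: "a \<le> k" "l \<le> b" "(k,l) \<noteq> (a,b)" using that d ban by (auto simp: inside_def)
    show "si a (ui a d) = d" using kl ii cab unfolding d by (auto simp: si_def ui_def)
    show "chord n (ui a d)" using kl ii cab unfolding d n_def by (auto simp: chord_def ui_def)
  qed
  have outer_back: "so n a x \<in> G" if xin: "x \<in> outerD n a G" for x
  proof -
    obtain d where "d \<in> G" "\<not> inside n a d" "x = uo n a d" using xin unfolding outerD_def by blast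
    then show ?thesis using out_id by simp
  qed
  have inner_back: "si a x \<in> G" if xin: "x \<in> innerD n a G" for x
  proof -
    obtain d where "d \<in> G" "inside n a d" "d \<noteq> (a, a + n - 1)" "x = ui a d" using xin unfolding innerD_def by blast
    then show ?thesis using in_id by simp
  qed
  have cdo: "chord_diagram m (outerD n a G)"
    unfolding chord_diagram_def outerD_def using out_ch by blast
  have cdi: "chord_diagram n (innerD n a G)"
    unfolding chord_diagram_def innerD_def using in_ch by blast
  have e1: "so n a ` outerD n a G = {d\<in>G. \<not> inside n a d}"
    unfolding outerD_def image_image using out_id by (auto intro!: image_eqI)
  have e2: "si a ` innerD n a G = {d\<in>G. inside n a d \<and> d \<noteq> (a, a + n - 1)}"
    unfolding innerD_def image_image using in_id by (auto intro!: image_eqI)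
  show "G = gcomp m n a (outerD n a G) (innerD n a G)"
    unfolding gcomp_alt e1 e2 using abG ban by (auto simp: inside_def)
  show "gravity_diagram m (outerD n a G)"
    unfolding gravity_diagram_def
  proof (intro conjI cdo notI)
    assume "\<exists>x y z. x < y \<and> y < z \<and> (x, y) \<in> outerD n a G \<and> (y, z) \<in> outerD n a G"
    then obtain x y z where h: "x < y" "y < z" "(x, y) \<in> outerD n a G" "(y, z) \<in> outerD n a G" by blast
    have G1: "(sO n a x, eO n a y) \<in> G" "(sO n a y, eO n a z) \<in> G"
      using outer_back[OF h(3)] outer_back[OF h(4)] by (simp_all add: so_pair)
    show False
    proof (cases "y = a")
      case True
      have "eO n a y = b" "sO n a y = a" "sO n a x = x" "eO n a z = z + n - 1"
        using True h ban by (auto simp: sO_def eO_def)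
      then have X: "(x, b) \<in> G" "(a, z + n - 1) \<in> G" using G1 True by auto
      have "b < z + n - 1" using h True ban n2 by linarith
      then show False using gravE2[OF g X(1) abG X(2)] h True cab by blast
    next
      case False
      have "sO n a y = eO n a y" using False sO_eO[OF n2] by simp
      moreover have "sO n a x < eO n a y" using cG[OF G1(1)] by simp
      moreover have "eO n a y < eO n a z" using h eO_less_iff[OF n1] by simp
      ultimately show False using gravE1[OF g] G1 by metis
    qed
  next
    assume "\<exists>i j k l. i < j \<and> j < k \<and> k < l \<and> (i, k) \<in> outerD n a G \<and> (j, k) \<in> outerD n a G \<and> (j, l) \<in> outerD n a G"
    then obtain p q k l where h: "p < q" "q < k" "k < l" "(p, k) \<in> outerD n a G" "(q, k) \<in> outerD n a G" "(q, l) \<in> outerD n a G" by blast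
    have G1: "(sO n a p, eO n a k) \<in> G" "(sO n a q, eO n a k) \<in> G" "(sO n a q, eO n a l) \<in> G"
      using outer_back[OF h(4)] outer_back[OF h(5)] outer_back[OF h(6)] by (simp_all add: so_pair)
    have "sO n a p < sO n a q" "eO n a k < eO n a l" using h sO_less_iff[OF n1] eO_less_iff[OF n1] by auto
    moreover have "sO n a q < eO n a k" using cG[OF G1(2)] by simp
    ultimately show False using gravE2[OF g G1] by blast
  qed
  show "gravity_diagram n (innerD n a G)"
    unfolding gravity_diagram_def
  proof (intro conjI cdi notI)
    assume "\<exists>x y z. x < y \<and> y < z \<and> (x, y) \<in> innerD n a G \<and> (y, z) \<in> innerD n a G"
    then obtain x y z where h: "x < y" "y < z" "(x, y) \<in> innerD n a G" "(y, z) \<in> innerD n a G" by blast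
    have G1: "(x + a - 1, y + a - 1) \<in> G" "(y + a - 1, z + a - 1) \<in> G"
      using inner_back[OF h(3)] inner_back[OF h(4)] by (simp_all add: si_pair)
    have "x + a - 1 < y + a - 1" "y + a - 1 < z + a - 1" using h cab by auto
    then show False using gravE1[OF g G1] by blast
  next
    assume "\<exists>i j k l. i < j \<and> j < k \<and> k < l \<and> (i, k) \<in> innerD n a G \<and> (j, k) \<in> innerD n a G \<and> (j, l) \<in> innerD n a G"
    then obtain p q k l where h: "p < q" "q < k" "k < l" "(p, k) \<in> innerD n a G" "(q, k) \<in> innerD n a G" "(q, l) \<in> innerD n a G" by blast
    have G1: "(p + a - 1, k + a - 1) \<in> G" "(q + a - 1, k + a - 1) \<in> G" "(q + a - 1, l + a - 1) \<in> G"
      using inner_back[OF h(4)] inner_back[OF h(5)] inner_back[OF h(6)] by (simp_all add: si_pair)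
    have "p + a - 1 < q + a - 1" "q + a - 1 < k + a - 1" "k + a - 1 < l + a - 1" using h cab by auto
    then show False using gravE2[OF g G1] by blast
  qed
qed




lemma sO_le_eO: "1 \<le> n \<Longrightarrow> a \<le> l \<Longrightarrow> sO n i a \<le> eO n i l" by (auto simp: sO_def eO_def)

lemma so_crosses: "1 \<le> n \<Longrightarrow> crosses (k,l) (a,b) \<Longrightarrow> crosses (so n i (k,l)) (so n i (a,b))"
  unfolding so_pair crosses_pair using sO_less_iff[of n i] eO_less_iff[of n i] sO_le_eO[of n] by meson

lemma si_crosses: "1 \<le> i \<Longrightarrow> crosses (k,l) (a,b) \<Longrightarrow> crosses (si i (k,l)) (si i (a,b))"
  unfolding si_pair crosses_pair by auto

lemma res_comp:
  assumes c1: "chord_diagram m G1" and c2: "chord_diagram n G2" and mn: "2 \<le> n" "1 \<le> i" "i \<le> m"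
    and r: "residual (gcomp m n i G1 G2) c0"
  shows "c0 = (i, i + n - 1) \<or> (\<exists>a b. residual G1 (a,b) \<and> c0 = so n i (a,b))
     \<or> (\<exists>a b. residual G2 (a,b) \<and> c0 = si i (a,b))"
proof -
  have c0: "c0 \<in> gcomp m n i G1 G2" using r by (simp add: residual_def)
  have nc: "\<And>d. d \<in> gcomp m n i G1 G2 \<Longrightarrow> d \<noteq> c0 \<Longrightarrow> \<not> crosses d c0" using r by (auto simp: residual_def)
  have n1: "1 \<le> n" using mn by simp
  from gcomp_memE[OF c0] show ?thesis
  proof (elim disjE exE conjE)
    fix a b assume ab: "(a,b) \<in> G1" "c0 = so n i (a,b)"
    have "residual G1 (a,b)" unfolding residual_def
    proof (intro conjI ab(1) notI)
      assume "\<exists>d\<in>G1. d \<noteq> (a, b) \<and> crosses d (a, b)"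
      then obtain k l where kl: "(k,l) \<in> G1" "(k,l) \<noteq> (a,b)" "crosses (k,l) (a,b)" by auto
      have "so n i (k,l) \<noteq> so n i (a,b)" using kl(2) sO_inj[OF n1] eO_inj[OF n1] by (simp add: so_pair)
      moreover have "so n i (k,l) \<in> gcomp m n i G1 G2" using kl(1) by (auto simp: gcomp_alt)
      ultimately show False using nc so_crosses[OF n1 kl(3)] ab(2) by blast
    qed
    then show ?thesis using ab by blast
  next
    fix a b assume ab: "(a,b) \<in> G2" "c0 = si i (a,b)"
    have "residual G2 (a,b)" unfolding residual_def
    proof (intro conjI ab(1) notI)
      assume "\<exists>d\<in>G2. d \<noteq> (a, b) \<and> crosses d (a, b)"
      then obtain k l where kl: "(k,l) \<in> G2" "(k,l) \<noteq> (a,b)" "crosses (k,l) (a,b)" by auto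
      have "si i (k,l) \<noteq> si i (a,b)" using kl(2) mn cdE[OF c2 kl(1)] cdE[OF c2 ab(1)] by (auto simp: si_pair)
      moreover have "si i (k,l) \<in> gcomp m n i G1 G2" using kl(1) by (auto simp: gcomp_alt)
      ultimately show False using nc si_crosses[OF mn(2) kl(3)] ab(2) by blast
    qed
    then show ?thesis using ab by blast
  next
    assume "c0 = (i, i + n - 1)" then show ?thesis by blast
  qed
qed

lemma glued_residual:
  assumes c1: "chord_diagram m G1" and c2: "chord_diagram n G2" and mn: "2 \<le> n" "1 \<le> i" "i \<le> m"
  shows "residual (gcomp m n i G1 G2) (i, i + n - 1)"
  unfolding residual_def
proof (intro conjI notI)
  show "(i, i + n - 1) \<in> gcomp m n i G1 G2" by (simp add: gcomp_alt)
next
  assume "\<exists>d\<in>gcomp m n i G1 G2. d \<noteq> (i, i + n - 1) \<and> crosses d (i, i + n - 1)"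
  then obtain k l where kl: "(k,l) \<in> gcomp m n i G1 G2" "crosses (k,l) (i, i + n - 1)" by auto
  from kl(1) show False
  proof (cases rule: gcomp_cases)
    case (O a b)
    then show False using kl(2) sO_range[of n i a] eO_range[of n i b] mn unfolding crosses_pair by linarith
  next
    case (I a b)
    then show False using kl(2) cdE[OF c2 I(1)] mn unfolding crosses_pair by linarith
  next
    case C
    then show False using kl(2) unfolding crosses_pair by linarith
  qed
qed




definition rc :: "(nat \<times> nat) set \<Rightarrow> nat \<times> nat" where
  "rc G = (SOME c. residual G c)"

lemma rc_props:
  assumes g: "gravity_diagram N G" and ex: "\<exists>c. residual G c"
  shows "residual G (rc G)" "1 \<le> fst (rc G)" "fst (rc G) < snd (rc G)" "snd (rc G) \<le> N" "rc G \<noteq> (1, N)"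
proof -
  show r: "residual G (rc G)" unfolding rc_def using ex by (rule someI_ex)
  have "rc G \<in> G" using r by (simp add: residual_def)
  then have "chord N (rc G)" using g by (simp add: gravity_diagram_def chord_diagram_def)
  then show "1 \<le> fst (rc G)" "fst (rc G) < snd (rc G)" "snd (rc G) \<le> N" "rc G \<noteq> (1, N)"
    by (auto simp: chord_def split: prod.splits)
qed

function Fg :: "(nat \<Rightarrow> (nat \<times> nat) set \<Rightarrow> 'b) \<Rightarrow> (nat \<Rightarrow> nat \<Rightarrow> nat \<Rightarrow> 'b \<Rightarrow> 'b \<Rightarrow> 'b) \<Rightarrow> nat \<Rightarrow> (nat \<times> nat) set \<Rightarrow> 'b" where
  "Fg h d N G = (if gravity_diagram N G \<and> (\<exists>c. residual G c) then
      d (N + fst (rc G) - snd (rc G)) (snd (rc G) + 1 - fst (rc G)) (fst (rc G))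
        (Fg h d (N + fst (rc G) - snd (rc G)) (outerD (snd (rc G) + 1 - fst (rc G)) (fst (rc G)) G))
        (Fg h d (snd (rc G) + 1 - fst (rc G)) (innerD (snd (rc G) + 1 - fst (rc G)) (fst (rc G)) G))
    else h N G)"
  by auto
termination
proof (relation "measure (\<lambda>(h,d,N,G). N)")
  show "wf (measure (\<lambda>(h,d,N,G). N))" by simp
next
  fix h :: "nat \<Rightarrow> (nat \<times> nat) set \<Rightarrow> 'b" and d N G
  assume a: "gravity_diagram N G \<and> (\<exists>c. residual G c)"
  from rc_props[OF conjunct1[OF a] conjunct2[OF a]]
  show "((h, d, N + fst (rc G) - snd (rc G), outerD (snd (rc G) + 1 - fst (rc G)) (fst (rc G)) G), h, d, N, G)
       \<in> measure (\<lambda>(h, d, N, G). N)" by auto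
next
  fix h :: "nat \<Rightarrow> (nat \<times> nat) set \<Rightarrow> 'b" and d N G
  assume a: "gravity_diagram N G \<and> (\<exists>c. residual G c)"
  from rc_props[OF conjunct1[OF a] conjunct2[OF a]]
  show "((h, d, snd (rc G) + 1 - fst (rc G), innerD (snd (rc G) + 1 - fst (rc G)) (fst (rc G)) G), h, d, N, G)
       \<in> measure (\<lambda>(h, d, N, G). N)" by (cases "rc G") auto
qed

declare Fg.simps[simp del]

lemma Fg_prime: "G \<in> pdiag N \<Longrightarrow> Fg h d N G = h N G"
  by (subst Fg.simps) (auto simp: pdiag_def)

lemma Fg_unf:
  assumes "gravity_diagram N G" "residual G c" "rc G = (a,b)"
  shows "Fg h d N G = d (N + a - b) (b + 1 - a) a (Fg h d (N + a - b) (outerD (b + 1 - a) a G)) (Fg h d (b + 1 - a) (innerD (b + 1 - a) a G))"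
proof -
  have e: "gravity_diagram N G \<and> (\<exists>c. residual G c)" using assms(1,2) by blast
  show ?thesis by (subst Fg.simps) (simp only: if_P[OF e] assms(3) fst_conv snd_conv)
qed

lemma Fg_glued:
  assumes X: "gravity_diagram m X" and Y: "gravity_diagram n Y" and mn: "2 \<le> m" "2 \<le> n" "1 \<le> i" "i \<le> m"
    and GG: "G = gcomp m n i X Y" and N: "N = m + n - 1" and r: "rc G = (i, i + n - 1)"
  shows "Fg h d N G = d m n i (Fg h d m X) (Fg h d n Y)"
proof -
  have g: "gravity_diagram N G" using closure_grav[OF X Y mn] GG N by simp
  have res: "residual G (i, i + n - 1)" using glued_residual[OF grav_cd[OF X] grav_cd[OF Y] mn(2-4)] GG by simp
  have e1: "N + i - (i + n - 1) = m" "i + n - 1 + 1 - i = n" using N mn by auto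
  show ?thesis using Fg_unf[OF g res r, of h d] unfolding e1 GG
      recover[OF grav_cd[OF X] grav_cd[OF Y] mn(2-4)] by simp
qed


lemma Qclos: assumes "ns_operad Q d" "2 \<le> m" "2 \<le> n" "1 \<le> i" "i \<le> m" "x \<in> Q m" "y \<in> Q n"
  shows "d m n i x y \<in> Q (m + n - 1)"
proof -
  have H: "\<forall>m n i x y. 2 \<le> m \<longrightarrow> 2 \<le> n \<longrightarrow> 1 \<le> i \<longrightarrow> i \<le> m \<longrightarrow> x \<in> Q m \<longrightarrow> y \<in> Q n
        \<longrightarrow> d m n i x y \<in> Q (m + n - 1)" using assms(1) unfolding ns_operad_def by (elim conjE) assumption
  show ?thesis by (rule H[rule_format]) (use assms in auto)
qed
lemma Qseq: assumes "ns_operad Q d" "2 \<le> l" "2 \<le> m" "2 \<le> n" "1 \<le> i" "i \<le> l" "1 \<le> j" "j \<le> m"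
  "x \<in> Q l" "y \<in> Q m" "z \<in> Q n"
  shows "d (l + m - 1) n (i + j - 1) (d l m i x y) z = d l (m + n - 1) i x (d m n j y z)"
proof -
  have H: "\<forall>l m n i j x y z. 2 \<le> l \<longrightarrow> 2 \<le> m \<longrightarrow> 2 \<le> n \<longrightarrow> 1 \<le> i \<longrightarrow> i \<le> l \<longrightarrow> 1 \<le> j \<longrightarrow> j \<le> m
        \<longrightarrow> x \<in> Q l \<longrightarrow> y \<in> Q m \<longrightarrow> z \<in> Q n
        \<longrightarrow> d (l + m - 1) n (i + j - 1) (d l m i x y) z = d l (m + n - 1) i x (d m n j y z)"
    using assms(1) unfolding ns_operad_def by (elim conjE) assumption
  show ?thesis by (rule H[rule_format]) (use assms in auto)
qed
lemma Qpar: assumes "ns_operad Q d" "2 \<le> l" "2 \<le> m" "2 \<le> n" "1 \<le> i" "i < j" "j \<le> l"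
  "x \<in> Q l" "y \<in> Q m" "z \<in> Q n"
  shows "d (l + m - 1) n (j + m - 1) (d l m i x y) z = d (l + n - 1) m i (d l n j x z) y"
proof -
  have H: "\<forall>l m n i j x y z. 2 \<le> l \<longrightarrow> 2 \<le> m \<longrightarrow> 2 \<le> n \<longrightarrow> 1 \<le> i \<longrightarrow> i < j \<longrightarrow> j \<le> l
        \<longrightarrow> x \<in> Q l \<longrightarrow> y \<in> Q m \<longrightarrow> z \<in> Q n
        \<longrightarrow> d (l + m - 1) n (j + m - 1) (d l m i x y) z = d (l + n - 1) m i (d l n j x z) y"
    using assms(1) unfolding ns_operad_def by (elim conjE) assumption
  show ?thesis by (rule H[rule_format]) (use assms in auto)
qed

lemma FinQ:
  assumes Qop: "ns_operad Q d" and hQ: "\<forall>n x. 2 \<le> n \<longrightarrow> x \<in> pdiag n \<longrightarrow> h n x \<in> Q n"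
  shows "2 \<le> N \<Longrightarrow> gravity_diagram N G \<Longrightarrow> Fg h d N G \<in> Q N"
proof (induction N arbitrary: G rule: less_induct)
  case (less N)
  show ?case
  proof (cases "\<exists>c. residual G c")
    case False
    then have "G \<in> pdiag N" using less.prems by (simp add: pdiag_def)
    then show ?thesis using Fg_prime[of G N h d] hQ less.prems by simp
  next
    case True
    obtain a b where rc: "rc G = (a,b)" by (cases "rc G")
    have r: "residual G (a,b)" using rc_props(1)[OF less.prems(2) True] rc by simp
    note D = decomp[OF less.prems(2) r]
    have "Fg h d (N + a - b) (outerD (b + 1 - a) a G) \<in> Q (N + a - b)"
      using less.IH[of "N + a - b"] D by simp
    moreover have "Fg h d (b + 1 - a) (innerD (b + 1 - a) a G) \<in> Q (b + 1 - a)"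
      using less.IH[of "b + 1 - a"] D by simp
    ultimately have "d (N + a - b) (b + 1 - a) a (Fg h d (N + a - b) (outerD (b + 1 - a) a G))
        (Fg h d (b + 1 - a) (innerD (b + 1 - a) a G)) \<in> Q (N + a - b + (b + 1 - a) - 1)"
      by (rule Qclos[OF Qop D(1) D(2) D(3) D(4)])
    moreover have "N + a - b + (b + 1 - a) - 1 = N" using D by simp
    ultimately show ?thesis unfolding Fg_unf[OF less.prems(2) r rc] by simp
  qed
qed




lemma Fg_hom:
  fixes h :: "nat \<Rightarrow> (nat \<times> nat) set \<Rightarrow> 'b"
  assumes Qop: "ns_operad Q d" and hQ: "\<forall>n x. 2 \<le> n \<longrightarrow> x \<in> pdiag n \<longrightarrow> h n x \<in> Q n"
  shows "2 \<le> m \<Longrightarrow> 2 \<le> n \<Longrightarrow> 1 \<le> i \<Longrightarrow> i \<le> m \<Longrightarrow> gravity_diagram m G1 \<Longrightarrow> gravity_diagram n G2 \<Longrightarrow>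
     Fg h d (m + n - 1) (gcomp m n i G1 G2) = d m n i (Fg h d m G1) (Fg h d n G2)"
proof (induction "m + n" arbitrary: m n i G1 G2 rule: less_induct)
  case less
  note mn = less.prems(1-4)
  note g1 = less.prems(5) and g2 = less.prems(6)
  define G where "G = gcomp m n i G1 G2"
  have FQ: "\<And>k X. 2 \<le> k \<Longrightarrow> gravity_diagram k X \<Longrightarrow> Fg h d k X \<in> Q k" using FinQ[OF Qop hQ] by blast
  have gG: "gravity_diagram (m + n - 1) G" using closure_grav[OF g1 g2 mn] G_def by simp
  have ex: "\<exists>c. residual G c" using glued_residual[OF grav_cd[OF g1] grav_cd[OF g2] mn(2-4)] G_def by blast
  obtain a0 b0 where rc: "rc G = (a0,b0)" by (cases "rc G")
  have r0: "residual G (a0,b0)" using rc_props(1)[OF gG ex] rc by simp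
  have rc3: "(a0,b0) = (i, i + n - 1) \<or> (\<exists>a b. residual G1 (a,b) \<and> (a0,b0) = so n i (a,b))
     \<or> (\<exists>a b. residual G2 (a,b) \<and> (a0,b0) = si i (a,b))"
    using res_comp[OF grav_cd[OF g1] grav_cd[OF g2] mn(2-4) r0[unfolded G_def]] by blast
  then consider "(a0,b0) = (i, i + n - 1)" | a' b' where "residual G1 (a',b')" "(a0,b0) = so n i (a',b')"
    | a' b' where "residual G2 (a',b')" "(a0,b0) = si i (a',b')" by blast
  then show ?case
  proof cases
    case 1
    have "Fg h d (m + n - 1) G = d m n i (Fg h d m G1) (Fg h d n G2)"
      by (rule Fg_glued[OF g1 g2 mn G_def refl]) (use 1 rc in simp)
    then show ?thesis by (simp add: G_def)
  next
    case (3 a' b')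
    define n1 where "n1 = n + a' - b'"
    define n2 where "n2 = b' + 1 - a'"
    define H1 where "H1 = outerD n2 a' G2"
    define H2 where "H2 = innerD n2 a' G2"
    have D: "2 \<le> n1" "2 \<le> n2" "1 \<le> a'" "a' \<le> n1" "n = n1 + n2 - 1" "b' = a' + n2 - 1"
       "gravity_diagram n1 H1" "gravity_diagram n2 H2" "G2 = gcomp n1 n2 a' H1 H2"
      using decomp[OF g2 3(1)] unfolding n1_def n2_def H1_def H2_def by auto
    have GX: "G = gcomp (m + n1 - 1) n2 (i + a' - 1) (gcomp m n1 i G1 H1) H2"
      using seq_assoc[OF grav_cd[OF g1] grav_cd[OF D(7)] grav_cd[OF D(8)] mn(1) D(1) D(2) mn(3) mn(4) D(3) D(4)]
        D(5) D(9) G_def by simp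
    have gX: "gravity_diagram (m + n1 - 1) (gcomp m n1 i G1 H1)" using closure_grav[OF g1 D(7) mn(1) D(1) mn(3-4)] .
    have rcX: "rc G = (i + a' - 1, i + a' - 1 + n2 - 1)" using rc 3(2) D mn by (simp add: si_pair add.commute add.left_commute)
    have step1: "Fg h d (m + n - 1) G = d (m + n1 - 1) n2 (i + a' - 1) (Fg h d (m + n1 - 1) (gcomp m n1 i G1 H1)) (Fg h d n2 H2)"
      by (rule Fg_glued[OF gX D(8) _ D(2) _ _ GX _ rcX]) (use mn D in auto)
    have IH1: "Fg h d (m + n1 - 1) (gcomp m n1 i G1 H1) = d m n1 i (Fg h d m G1) (Fg h d n1 H1)"
      by (rule less.hyps) (use mn D g1 in auto)
    have IH2: "Fg h d (n1 + n2 - 1) (gcomp n1 n2 a' H1 H2) = d n1 n2 a' (Fg h d n1 H1) (Fg h d n2 H2)"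
      by (rule less.hyps) (use mn D in auto)
    have QS: "d (m + n1 - 1) n2 (i + a' - 1) (d m n1 i (Fg h d m G1) (Fg h d n1 H1)) (Fg h d n2 H2)
        = d m (n1 + n2 - 1) i (Fg h d m G1) (d n1 n2 a' (Fg h d n1 H1) (Fg h d n2 H2))"
      by (rule Qseq[OF Qop mn(1) D(1) D(2) mn(3) mn(4) D(3) D(4) FQ FQ FQ]) (use mn D g1 in auto)
    show ?thesis unfolding G_def[symmetric] step1 IH1 QS IH2[symmetric] D(5)[symmetric] D(9)[symmetric] ..
  next
    case (2 a' b')
    define m1 where "m1 = m + a' - b'"
    define m2 where "m2 = b' + 1 - a'"
    define H1 where "H1 = outerD m2 a' G1"
    define H2 where "H2 = innerD m2 a' G1"
    have D: "2 \<le> m1" "2 \<le> m2" "1 \<le> a'" "a' \<le> m1" "m = m1 + m2 - 1" "b' = a' + m2 - 1"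
       "gravity_diagram m1 H1" "gravity_diagram m2 H2" "G1 = gcomp m1 m2 a' H1 H2"
      using decomp[OF g1 2(1)] unfolding m1_def m2_def H1_def H2_def by auto
    have FH1: "Fg h d m1 H1 \<in> Q m1" using FQ D by blast
    have FH2: "Fg h d m2 H2 \<in> Q m2" using FQ D by blast
    have FG2: "Fg h d n G2 \<in> Q n" using FQ mn g2 by blast
    have IHG1: "Fg h d m G1 = d m1 m2 a' (Fg h d m1 H1) (Fg h d m2 H2)"
      using less.hyps[of m1 m2 a' H1 H2] mn D by simp
    consider (lt) "i < a'" | (mid) "a' \<le> i" "i \<le> b'" | (gt) "b' < i" by linarith
    then show ?thesis
    proof cases
      case lt
      have GX: "G = gcomp (m1 + n - 1) m2 (a' + n - 1) (gcomp m1 n i H1 G2) H2"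
        using par_assoc[OF grav_cd[OF D(7)] grav_cd[OF g2] grav_cd[OF D(8)] D(1) mn(2) D(2) mn(3) lt D(4)]
          D(5) D(9) G_def by simp
      have gX: "gravity_diagram (m1 + n - 1) (gcomp m1 n i H1 G2)"
        using closure_grav[OF D(7) g2 D(1) mn(2) mn(3)] lt D by simp
      have rcX: "rc G = (a' + n - 1, a' + n - 1 + m2 - 1)" using rc 2(2) D mn lt by (simp add: so_pair sO_def eO_def add.commute add.left_commute)
      have step1: "Fg h d (m + n - 1) G = d (m1 + n - 1) m2 (a' + n - 1) (Fg h d (m1 + n - 1) (gcomp m1 n i H1 G2)) (Fg h d m2 H2)"
        by (rule Fg_glued[OF gX D(8) _ D(2) _ _ GX _ rcX]) (use mn D in auto)
      have IH1: "Fg h d (m1 + n - 1) (gcomp m1 n i H1 G2) = d m1 n i (Fg h d m1 H1) (Fg h d n G2)"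
        by (rule less.hyps) (use mn D g2 lt in auto)
      have QP: "d (m1 + n - 1) m2 (a' + n - 1) (d m1 n i (Fg h d m1 H1) (Fg h d n G2)) (Fg h d m2 H2)
          = d (m1 + m2 - 1) n i (d m1 m2 a' (Fg h d m1 H1) (Fg h d m2 H2)) (Fg h d n G2)"
        by (rule Qpar[OF Qop D(1) mn(2) D(2) mn(3) lt D(4) FH1 FG2 FH2])
      have "Fg h d (m + n - 1) (gcomp m n i G1 G2) = d (m1 + n - 1) m2 (a' + n - 1) (d m1 n i (Fg h d m1 H1) (Fg h d n G2)) (Fg h d m2 H2)"
        using step1 IH1 G_def by simp
      also have "\<dots> = d (m1 + m2 - 1) n i (d m1 m2 a' (Fg h d m1 H1) (Fg h d m2 H2)) (Fg h d n G2)" by (rule QP)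
      also have "\<dots> = d m n i (Fg h d m G1) (Fg h d n G2)" using IHG1 D(5) by simp
      finally show ?thesis .
    next
      case mid
      define j where "j = i + 1 - a'"
      have j: "1 \<le> j" "j \<le> m2" "a' + j - 1 = i" using mid D unfolding j_def by auto
      have GX: "G = gcomp m1 (m2 + n - 1) a' H1 (gcomp m2 n j H2 G2)"
        using seq_assoc[OF grav_cd[OF D(7)] grav_cd[OF D(8)] grav_cd[OF g2] D(1) D(2) mn(2) D(3) D(4) j(1) j(2)]
          D(5) D(9) G_def j(3) by simp
      have gX: "gravity_diagram (m2 + n - 1) (gcomp m2 n j H2 G2)"
        using closure_grav[OF D(8) g2 D(2) mn(2) j(1) j(2)] .
      have rcX: "rc G = (a', a' + (m2 + n - 1) - 1)" using rc 2(2) D mn mid by (simp add: so_pair sO_def eO_def add.commute add.left_commute)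
      have step1: "Fg h d (m + n - 1) G = d m1 (m2 + n - 1) a' (Fg h d m1 H1) (Fg h d (m2 + n - 1) (gcomp m2 n j H2 G2))"
        by (rule Fg_glued[OF D(7) gX D(1) _ D(3) D(4) GX _ rcX]) (use mn D in auto)
      have IH1: "Fg h d (m2 + n - 1) (gcomp m2 n j H2 G2) = d m2 n j (Fg h d m2 H2) (Fg h d n G2)"
        by (rule less.hyps) (use mn D g2 j in auto)
      have QS: "d (m1 + m2 - 1) n (a' + j - 1) (d m1 m2 a' (Fg h d m1 H1) (Fg h d m2 H2)) (Fg h d n G2)
          = d m1 (m2 + n - 1) a' (Fg h d m1 H1) (d m2 n j (Fg h d m2 H2) (Fg h d n G2))"
        by (rule Qseq[OF Qop D(1) D(2) mn(2) D(3) D(4) j(1) j(2) FH1 FH2 FG2])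
      have "Fg h d (m + n - 1) (gcomp m n i G1 G2) = d m1 (m2 + n - 1) a' (Fg h d m1 H1) (d m2 n j (Fg h d m2 H2) (Fg h d n G2))"
        using step1 IH1 G_def by simp
      also have "\<dots> = d (m1 + m2 - 1) n (a' + j - 1) (d m1 m2 a' (Fg h d m1 H1) (Fg h d m2 H2)) (Fg h d n G2)" by (rule QS[symmetric])
      also have "\<dots> = d m n i (Fg h d m G1) (Fg h d n G2)" using IHG1 D(5) j(3) by simp
      finally show ?thesis .
    next
      case gt
      define j where "j = i + 1 - m2"
      have j: "a' < j" "j \<le> m1" "j + m2 - 1 = i" using gt D mn unfolding j_def by auto
      have GX: "G = gcomp (m1 + n - 1) m2 a' (gcomp m1 n j H1 G2) H2"
        using par_assoc[OF grav_cd[OF D(7)] grav_cd[OF D(8)] grav_cd[OF g2] D(1) D(2) mn(2) D(3) j(1) j(2)]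
          D(5) D(9) G_def j(3) by simp
      have gX: "gravity_diagram (m1 + n - 1) (gcomp m1 n j H1 G2)"
        using closure_grav[OF D(7) g2 D(1) mn(2) _ j(2)] j D by simp
      have rcX: "rc G = (a', a' + m2 - 1)" using rc 2(2) D mn gt by (simp add: so_pair sO_def eO_def add.commute add.left_commute)
      have step1: "Fg h d (m + n - 1) G = d (m1 + n - 1) m2 a' (Fg h d (m1 + n - 1) (gcomp m1 n j H1 G2)) (Fg h d m2 H2)"
        by (rule Fg_glued[OF gX D(8) _ D(2) D(3) _ GX _ rcX]) (use mn D in auto)
      have IH1: "Fg h d (m1 + n - 1) (gcomp m1 n j H1 G2) = d m1 n j (Fg h d m1 H1) (Fg h d n G2)"
        by (rule less.hyps) (use mn D g2 j in auto)
      have QP: "d (m1 + m2 - 1) n (j + m2 - 1) (d m1 m2 a' (Fg h d m1 H1) (Fg h d m2 H2)) (Fg h d n G2)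
          = d (m1 + n - 1) m2 a' (d m1 n j (Fg h d m1 H1) (Fg h d n G2)) (Fg h d m2 H2)"
        by (rule Qpar[OF Qop D(1) D(2) mn(2) D(3) j(1) j(2) FH1 FH2 FG2])
      have "Fg h d (m + n - 1) (gcomp m n i G1 G2) = d (m1 + n - 1) m2 a' (d m1 n j (Fg h d m1 H1) (Fg h d n G2)) (Fg h d m2 H2)"
        using step1 IH1 G_def by simp
      also have "\<dots> = d (m1 + m2 - 1) n (j + m2 - 1) (d m1 m2 a' (Fg h d m1 H1) (Fg h d m2 H2)) (Fg h d n G2)" by (rule QP[symmetric])
      also have "\<dots> = d m n i (Fg h d m G1) (Fg h d n G2)" using IHG1 D(5) j(3) by simp
      finally show ?thesis .
    qed
  qed
qed


lemma Fg_uniq: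
  fixes h :: "nat \<Rightarrow> (nat \<times> nat) set \<Rightarrow> 'b"
  assumes Qop: "ns_operad Q d" and hQ: "\<forall>n x. 2 \<le> n \<longrightarrow> x \<in> pdiag n \<longrightarrow> h n x \<in> Q n"
    and F'hom: "ns_operad_hom gdiag gcomp Q d F'" and F'h: "\<forall>n x. 2 \<le> n \<longrightarrow> x \<in> pdiag n \<longrightarrow> F' n x = h n x"
  shows "2 \<le> N \<Longrightarrow> gravity_diagram N G \<Longrightarrow> F' N G = Fg h d N G"
proof (induction N arbitrary: G rule: less_induct)
  case (less N)
  show ?case
  proof (cases "\<exists>c. residual G c")
    case False
    then have "G \<in> pdiag N" using less.prems by (simp add: pdiag_def)
    then show ?thesis using Fg_prime[of G N h d] F'h less.prems by simp
  next
    case True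
    then obtain a b where r: "residual G (a,b)" by auto
    note D = decomp[OF less.prems(2) r]
    define m n X Y where "m = N + a - b" and "n = b + 1 - a" and "X = outerD (b + 1 - a) a G" and "Y = innerD (b + 1 - a) a G"
    have D': "2 \<le> m" "2 \<le> n" "1 \<le> a" "a \<le> m" "N = m + n - 1" "gravity_diagram m X" "gravity_diagram n Y" "G = gcomp m n a X Y"
      using D unfolding m_def n_def X_def Y_def by auto
    have hom': "\<And>m n i x y. 2 \<le> m \<Longrightarrow> 2 \<le> n \<Longrightarrow> 1 \<le> i \<Longrightarrow> i \<le> m \<Longrightarrow> x \<in> gdiag m \<Longrightarrow> y \<in> gdiag n
        \<Longrightarrow> F' (m + n - 1) (gcomp m n i x y) = d m n i (F' m x) (F' n y)"
      using F'hom unfolding ns_operad_hom_def by blast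
    have "F' N G = F' (m + n - 1) (gcomp m n a X Y)" using D' by simp
    also have "\<dots> = d m n a (F' m X) (F' n Y)" using hom' D' by (simp add: gdiag_def)
    also have "\<dots> = d m n a (Fg h d m X) (Fg h d n Y)" using less.IH D' by simp
    also have "\<dots> = Fg h d (m + n - 1) (gcomp m n a X Y)" using Fg_hom[OF Qop hQ] D' by simp
    also have "\<dots> = Fg h d N G" using D' by simp
    finally show ?thesis .
  qed
qed

theorem mainTheorem7:
  "ns_operad gdiag gcomp
   \<and> (\<forall>n. 2 \<le> n \<longrightarrow> pdiag n \<subseteq> gdiag n)
   \<and> (\<forall>(Q :: nat \<Rightarrow> 'b set) (d :: nat \<Rightarrow> nat \<Rightarrow> nat \<Rightarrow> 'b \<Rightarrow> 'b \<Rightarrow> 'b)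
        (h :: nat \<Rightarrow> (nat \<times> nat) set \<Rightarrow> 'b).
       ns_operad Q d \<and> (\<forall>n x. 2 \<le> n \<longrightarrow> x \<in> pdiag n \<longrightarrow> h n x \<in> Q n) \<longrightarrow>
       (\<exists>F. ns_operad_hom gdiag gcomp Q d F
          \<and> (\<forall>n x. 2 \<le> n \<longrightarrow> x \<in> pdiag n \<longrightarrow> F n x = h n x)
          \<and> (\<forall>F'. ns_operad_hom gdiag gcomp Q d F'
                 \<and> (\<forall>n x. 2 \<le> n \<longrightarrow> x \<in> pdiag n \<longrightarrow> F' n x = h n x)
                 \<longrightarrow> (\<forall>n x. 2 \<le> n \<longrightarrow> x \<in> gdiag n \<longrightarrow> F' n x = F n x))))"
proof (intro conjI allI impI)
  show "ns_operad gdiag gcomp" by (rule g_operad)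
next
  fix n :: nat show "pdiag n \<subseteq> gdiag n" by (auto simp: pdiag_def gdiag_def)
next
  fix Q :: "nat \<Rightarrow> 'b set" and d :: "nat \<Rightarrow> nat \<Rightarrow> nat \<Rightarrow> 'b \<Rightarrow> 'b \<Rightarrow> 'b" and h :: "nat \<Rightarrow> (nat \<times> nat) set \<Rightarrow> 'b"
  assume a: "ns_operad Q d \<and> (\<forall>n x. 2 \<le> n \<longrightarrow> x \<in> pdiag n \<longrightarrow> h n x \<in> Q n)"
  then have Qop: "ns_operad Q d" and hQ: "\<forall>n x. 2 \<le> n \<longrightarrow> x \<in> pdiag n \<longrightarrow> h n x \<in> Q n" by auto
  have hom: "ns_operad_hom gdiag gcomp Q d (Fg h d)"
    unfolding ns_operad_hom_def gdiag_def
    using FinQ[OF Qop hQ] Fg_hom[OF Qop hQ] by auto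
  have agree: "\<forall>n x. 2 \<le> n \<longrightarrow> x \<in> pdiag n \<longrightarrow> Fg h d n x = h n x" using Fg_prime by blast
  have uniq: "\<forall>F'. ns_operad_hom gdiag gcomp Q d F' \<and> (\<forall>n x. 2 \<le> n \<longrightarrow> x \<in> pdiag n \<longrightarrow> F' n x = h n x)
      \<longrightarrow> (\<forall>n x. 2 \<le> n \<longrightarrow> x \<in> gdiag n \<longrightarrow> F' n x = Fg h d n x)"
    using Fg_uniq[OF Qop hQ] by (auto simp: gdiag_def)
  show "\<exists>F. ns_operad_hom gdiag gcomp Q d F
          \<and> (\<forall>n x. 2 \<le> n \<longrightarrow> x \<in> pdiag n \<longrightarrow> F n x = h n x)
          \<and> (\<forall>F'. ns_operad_hom gdiag gcomp Q d F'
                 \<and> (\<forall>n x. 2 \<le> n \<longrightarrow> x \<in> pdiag n \<longrightarrow> F' n x = h n x)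
                 \<longrightarrow> (\<forall>n x. 2 \<le> n \<longrightarrow> x \<in> gdiag n \<longrightarrow> F' n x = F n x))"
    using hom agree uniq by blast
qed


end
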